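(* Let $G=(V,E)$ be a finite graph without isolated vertices, let $p\in[0,1]$, $t\ge0$, let $\bar{\mathbf x}\in\{\mathcal R,\mathcal B\}^V$ be a configuration and $u\in V$. For $k\in\mathbb N$ let $\mathcal E_k$ be the event that $x_u^{(t+1)}\neq\mathcal B$ under the $(k,p,\mathcal B)$-Edge-Majority dynamics. Then for every $h\in\mathbb N_0$, $$\Pr(\mathcal E_{2h+1}\mid \mathbf X^{(t)}=\bar{\mathbf x})=\Pr(\mathcal E_{2h+2}\mid \mathbf X^{(t)}=\bar{\mathbf x}).$$ The same identity holds when $\mathcal E_k$ is defined with respect to the $(k,p,\mathcal B)$-Node-Majority dynamics instead.
   Context: States are in $\{\mathcal R,\mathcal B\}$; $x_u^{(t)}$ is the state of node $u$ at round $t$ and $\mathbf X^{(t)}$ the configuration at round $t$. $(k,p,\mathcal B)$-Edge-Majority: at each round every node $u$ independently samples $k$ neighbours uniformly at random with replacement; for each sampled neighbour $v$, independently, $u$ sees $v$ as $\mathcal B$ with probability $p$ and otherwise sees $v$'s true current state; $u$'s next state is the state seen more often in the sample, ties broken uniformly at random. $(k,p,\mathcal B)$-Node-Majority: at each round every node $u$ independently samples $k$ neighbours uniformly at random with replacement and draws an independent Bernoulli($p$) variable $M$; if $M=1$ its next state is $\mathcal B$; otherwise its next state is the majority among the true current states of the sampled neighbours, ties broken uniformly at random. *)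

theory Defs
  imports "HOL-Probability.Probability"
begin

datatype colour = Red | Blue

definition simple_graph :: "'a set \<Rightarrow> ('a \<Rightarrow> 'a \<Rightarrow> bool) \<Rightarrow> bool" where
  "simple_graph V E \<longleftrightarrow> finite V \<and> (\<forall>u\<in>V. \<forall>v\<in>V. E u v \<longrightarrow> E v u) \<and> (\<forall>u\<in>V. \<not> E u u)"

definition no_isolated :: "'a set \<Rightarrow> ('a \<Rightarrow> 'a \<Rightarrow> bool) \<Rightarrow> bool" where
  "no_isolated V E \<longleftrightarrow> (\<forall>u\<in>V. \<exists>v\<in>V. E u v)"

definition nbrs :: "'a set \<Rightarrow> ('a \<Rightarrow> 'a \<Rightarrow> bool) \<Rightarrow> 'a \<Rightarrow> 'a set" where
  "nbrs V E u = {v\<in>V. E u v}"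

fun iid_samples :: "nat \<Rightarrow> 'b pmf \<Rightarrow> 'b list pmf" where
  "iid_samples 0 d = return_pmf []"
| "iid_samples (Suc k) d = bind_pmf d (\<lambda>c. map_pmf (Cons c) (iid_samples k d))"

definition majority :: "colour list \<Rightarrow> colour pmf" where
  "majority cs =
     (let nb = length (filter (\<lambda>c. c = Blue) cs); nr = length (filter (\<lambda>c. c = Red) cs) in
      if nb > nr then return_pmf Blue
      else if nr > nb then return_pmf Red
      else pmf_of_set {Red, Blue})"

definition edge_seen :: "'a set \<Rightarrow> ('a \<Rightarrow> 'a \<Rightarrow> bool) \<Rightarrow> real \<Rightarrow> ('a \<Rightarrow> colour) \<Rightarrow> 'a \<Rightarrow> colour pmf" where
  "edge_seen V E p x u =
     bind_pmf (pmf_of_set (nbrs V E u)) (\<lambda>v.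
       map_pmf (\<lambda>b. if b then Blue else x v) (bernoulli_pmf p))"

text \<open>Distribution of x_u^(t+1) given X^(t) = x under (k,p,Blue)-Edge-Majority.\<close>
definition edge_majority_next :: "nat \<Rightarrow> real \<Rightarrow> 'a set \<Rightarrow> ('a \<Rightarrow> 'a \<Rightarrow> bool) \<Rightarrow> ('a \<Rightarrow> colour) \<Rightarrow> 'a \<Rightarrow> colour pmf" where
  "edge_majority_next k p V E x u = bind_pmf (iid_samples k (edge_seen V E p x u)) majority"

text \<open>Distribution of x_u^(t+1) given X^(t) = x under (k,p,Blue)-Node-Majority.\<close>
definition node_majority_next :: "nat \<Rightarrow> real \<Rightarrow> 'a set \<Rightarrow> ('a \<Rightarrow> 'a \<Rightarrow> bool) \<Rightarrow> ('a \<Rightarrow> colour) \<Rightarrow> 'a \<Rightarrow> colour pmf" where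
  "node_majority_next k p V E x u =
     bind_pmf (iid_samples k (pmf_of_set (nbrs V E u))) (\<lambda>vs.
       bind_pmf (bernoulli_pmf p) (\<lambda>M.
         if M then return_pmf Blue else majority (map x vs)))"

end

theory Submission
  imports Defs
begin

definition mc :: "nat \<Rightarrow> nat \<Rightarrow> colour pmf" where
  "mc k r = (if k < 2*r then return_pmf Red else if 2*r < k then return_pmf Blue else pmf_of_set {Red,Blue})"

definition nr :: "colour list \<Rightarrow> nat" where "nr cs = length (filter (\<lambda>c. c = Red) cs)"

lemma len_blue: "length (filter (\<lambda>c. c = Blue) cs) = length cs - nr cs"
proof (induction cs)
  case Nil then show ?case by (simp add: nr_def)
next
  case (Cons a cs)
  have "nr cs \<le> length cs" unfolding nr_def by (rule length_filter_le)
  with Cons show ?case by (cases a) (auto simp: nr_def Suc_diff_le)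
qed

lemma iid_len: "cs \<in> set_pmf (iid_samples k d) \<Longrightarrow> length cs = k"
  by (induction k arbitrary: cs) auto

lemma maj_mc: "majority cs = mc (length cs) (nr cs)"
proof -
  have "nr cs \<le> length cs" unfolding nr_def by (rule length_filter_le)
  then show ?thesis unfolding majority_def mc_def Let_def len_blue
    by (auto simp: nr_def[symmetric])
qed

lemma d_bern: "(d::colour pmf) = map_pmf (\<lambda>b. if b then Red else Blue) (bernoulli_pmf (pmf d Red))"
proof -
  define f :: "bool \<Rightarrow> colour" where "f = (\<lambda>b. if b then Red else Blue)"
  have U: "(UNIV::colour set) = {Red,Blue}" using colour.exhaust by auto
  have "(\<Sum>c\<in>{Red,Blue}. pmf d c) = 1"
    by (rule sum_pmf_eq_1) (simp, simp add: U[symmetric])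
  then have s: "pmf d Blue = 1 - pmf d Red" by simp
  have q0: "0 \<le> pmf d Red" "pmf d Red \<le> 1" by (simp_all add: pmf_le_1)
  have inj: "inj f" unfolding f_def by (rule injI) (simp split: if_splits)
  have "d = map_pmf f (bernoulli_pmf (pmf d Red))"
  proof (rule pmf_eqI)
    fix c
    show "pmf d c = pmf (map_pmf f (bernoulli_pmf (pmf d Red))) c"
    proof (cases c)
      case Red
      then have "c = f True" by (simp add: f_def)
      then show ?thesis using q0 by (simp only: pmf_map_inj'[OF inj]) (simp add: Red)
    next
      case Blue
      then have "c = f False" by (simp add: f_def)
      then show ?thesis using q0 s by (simp only: pmf_map_inj'[OF inj]) (simp add: Blue)
    qed
  qed
  then show ?thesis by (simp add: f_def)
qed

lemma nr_Cons: "nr (c # cs) = (if c = Red then 1 else 0) + nr cs"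
  by (simp add: nr_def)

lemma iid_binom: "map_pmf nr (iid_samples k d) = binomial_pmf k (pmf d Red)"
proof (induction k)
  case 0
  have "pmf d Red \<in> {0..1}" by (simp add: pmf_le_1)
  then show ?case by (simp add: binomial_pmf_0 nr_def)
next
  case (Suc k)
  define q where "q = pmf d Red"
  have q: "q \<in> {0..1}" by (simp add: q_def pmf_le_1)
  have "map_pmf nr (iid_samples (Suc k) d)
      = bind_pmf d (\<lambda>c. map_pmf (\<lambda>r. (if c = Red then 1 else 0) + r) (map_pmf nr (iid_samples k d)))"
    by (simp add: map_bind_pmf map_pmf_comp nr_Cons o_def)
  also have "\<dots> = bind_pmf d (\<lambda>c. map_pmf (\<lambda>r. (if c = Red then 1 else 0) + r) (binomial_pmf k q))"
    using Suc by (simp add: q_def)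
  also have "\<dots> = bind_pmf (map_pmf (\<lambda>b. if b then Red else Blue) (bernoulli_pmf q))
       (\<lambda>c. map_pmf (\<lambda>r. (if c = Red then 1 else 0) + r) (binomial_pmf k q))"
    using d_bern[of d] by (simp add: q_def)
  also have "\<dots> = bind_pmf (bernoulli_pmf q) (\<lambda>b. map_pmf (\<lambda>r. (if b then 1 else 0) + r) (binomial_pmf k q))"
    unfolding bind_map_pmf by (rule bind_pmf_cong[OF refl]) (rule map_pmf_cong, auto)
  also have "\<dots> = binomial_pmf (Suc k) q"
    using q by (simp add: binomial_pmf_Suc map_pmf_def)
  finally show ?case by (simp add: q_def)
qed

lemma bind_maj: "bind_pmf (iid_samples k d) majority = bind_pmf (binomial_pmf k (pmf d Red)) (mc k)"
proof -
  have "bind_pmf (iid_samples k d) majority = bind_pmf (iid_samples k d) (\<lambda>cs. mc k (nr cs))"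
    by (rule bind_pmf_cong) (auto simp: maj_mc iid_len)
  also have "\<dots> = bind_pmf (map_pmf nr (iid_samples k d)) (mc k)"
    by (simp add: bind_map_pmf)
  finally show ?thesis by (simp add: iid_binom)
qed

lemma mc_red: "pmf (mc k r) Red = (if k < 2*r then 1 else if 2*r < k then 0 else 1/2)"
  by (auto simp: mc_def)

lemma main_R:
  "pmf (bind_pmf (iid_samples (2*h+1) d) majority) Red = pmf (bind_pmf (iid_samples (2*h+2) d) majority) Red"
proof -
  define q where "q = pmf d Red"
  define n where "n = 2*h+1"
  define B where "B = binomial_pmf n q"
  have q: "q \<in> {0..1}" by (simp add: q_def pmf_le_1)
  have sB: "set_pmf B \<subseteq> {..n}" unfolding B_def using q by (auto simp: set_pmf_binomial_eq split: if_splits)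
  have I: "(\<integral>r. f r \<partial>measure_pmf B) = (\<Sum>r\<le>n. f r * pmf B r)" for f :: "nat \<Rightarrow> real"
    by (rule integral_measure_pmf_real) (use sB in auto)
  have "bind_pmf (iid_samples (2*h+1) d) majority = bind_pmf B (mc n)"
    using bind_maj[of "2*h+1" d] by (simp only: B_def q_def n_def)
  then have L: "pmf (bind_pmf (iid_samples (2*h+1) d) majority) Red = (\<Sum>r\<le>n. pmf (mc n r) Red * pmf B r)"
    by (simp add: pmf_bind I)
  have e: "2*h+2 = Suc n" by (simp add: n_def)
  have "pmf (bind_pmf (iid_samples (2*h+2) d) majority) Red = pmf (bind_pmf (binomial_pmf (Suc n) q) (mc (Suc n))) Red"
    by (simp only: e bind_maj q_def)
  also have "\<dots> = pmf (bind_pmf (bernoulli_pmf q) (\<lambda>b. bind_pmf B (\<lambda>k. mc (Suc n) ((if b then 1 else 0) + k)))) Red"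
    using binomial_pmf_Suc[OF q, of n] by (simp add: B_def bind_assoc_pmf bind_return_pmf)
  also have "\<dots> = q * pmf (bind_pmf B (\<lambda>k. mc (Suc n) (1 + k))) Red + (1-q) * pmf (bind_pmf B (\<lambda>k. mc (Suc n) k)) Red"
    using q by (simp only: pmf_bind[of "bernoulli_pmf q"]) (simp add: algebra_simps)
  also have "\<dots> = q * (\<Sum>r\<le>n. pmf (mc (Suc n) (1+r)) Red * pmf B r) + (1-q) * (\<Sum>r\<le>n. pmf (mc (Suc n) r) Red * pmf B r)"
    by (simp only: pmf_bind I)
  finally have R: "pmf (bind_pmf (iid_samples (2*h+2) d) majority) Red = \<dots>" .
  define F where "F r = (q * pmf (mc (Suc n) (1+r)) Red + (1-q) * pmf (mc (Suc n) r) Red - pmf (mc n r) Red) * pmf B r" for r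
  have "(\<Sum>r\<le>n. F r) = (\<Sum>r\<in>{h, Suc h}. F r)"
  proof (rule sum.mono_neutral_right)
    show "\<forall>i\<in>{..n} - {h, Suc h}. F i = 0"
    proof
      fix i assume "i \<in> {..n} - {h, Suc h}"
      then have "i < h \<or> i > Suc h" by auto
      then show "F i = 0" by (auto simp: F_def mc_red n_def algebra_simps)
    qed
  qed (auto simp: n_def)
  also have "\<dots> = 0"
  proof -
    have c: "(n choose Suc h) = (n choose h)"
      unfolding n_def by (subst binomial_symmetric) auto
    have pB: "pmf B r = (n choose r) * q^r * (1-q)^(n-r)" for r
      using q by (simp add: B_def)
    have e1: "n - h = Suc h" "n - Suc h = h" by (simp_all add: n_def)
    have n: "n = 2*h+1" by (simp add: n_def)
    have m1: "pmf (mc (Suc n) (1+h)) Red = 1/2" unfolding mc_red n by simp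
    have m2: "pmf (mc (Suc n) h) Red = 0" unfolding mc_red n by simp
    have m3: "pmf (mc n h) Red = 0" unfolding mc_red n by simp
    have m4: "pmf (mc (Suc n) (1+Suc h)) Red = 1" unfolding mc_red n by simp
    have m5: "pmf (mc (Suc n) (Suc h)) Red = 1/2" unfolding mc_red n by simp
    have m6: "pmf (mc n (Suc h)) Red = 1" unfolding mc_red n by simp
    note m = m1 m2 m3 m4 m5 m6
    define K where "K = (n choose h) * q^h * (1-q)^h"
    have f1: "F h = K * (q * (1-q) / 2)"
      unfolding F_def m pB e1 K_def by (simp add: power_Suc algebra_simps)
    have "F (Suc h) = (q + (1-q)/2 - 1) * ((n choose h) * q^(Suc h) * (1-q)^h)"
      unfolding F_def m pB e1 c by simp
    also have "\<dots> = K * (q * (q + (1-q)/2 - 1))"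
      unfolding K_def power_Suc by (simp only: mult_ac)
    finally have f2: "F (Suc h) = K * (q * (q + (1-q)/2 - 1))" .
    have f3: "q * (1-q) / 2 + q * (q + (1-q)/2 - 1) = 0" by (simp add: algebra_simps)
    have "F h + F (Suc h) = K * (q * (1-q) / 2 + q * (q + (1-q)/2 - 1))"
      unfolding f1 f2 by (simp only: distrib_left)
    then show ?thesis using f3 by simp
  qed
  finally have "(\<Sum>r\<le>n. F r) = 0" .
  then show ?thesis unfolding L R F_def
    by (simp add: algebra_simps sum.distrib sum_subtractf sum_distrib_left)
qed

lemma iid_map: "iid_samples k (map_pmf f d) = map_pmf (map f) (iid_samples k d)"
  by (induction k) (simp_all add: bind_map_pmf map_bind_pmf map_pmf_comp o_def)

lemma blue_set: "{c. c \<noteq> Blue} = {Red}"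
  using colour.exhaust by auto

lemma node_red:
  assumes "0 \<le> p" "p \<le> 1"
  shows "pmf (node_majority_next k p V E x u) Red
     = (1-p) * pmf (bind_pmf (iid_samples k (map_pmf x (pmf_of_set (nbrs V E u)))) majority) Red"
  using assms by (simp add: node_majority_next_def pmf_bind iid_map bind_map_pmf o_def)

theorem proposition3p4:
  fixes V :: "'a set" and E :: "'a \<Rightarrow> 'a \<Rightarrow> bool" and p :: real
    and x :: "'a \<Rightarrow> colour" and u :: 'a and h :: nat
  assumes "simple_graph V E" and "no_isolated V E"
    and "0 \<le> p" and "p \<le> 1" and "u \<in> V"
  shows "measure_pmf.prob (edge_majority_next (2*h+1) p V E x u) {c. c \<noteq> Blue}
           = measure_pmf.prob (edge_majority_next (2*h+2) p V E x u) {c. c \<noteq> Blue}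
       \<and> measure_pmf.prob (node_majority_next (2*h+1) p V E x u) {c. c \<noteq> Blue}
           = measure_pmf.prob (node_majority_next (2*h+2) p V E x u) {c. c \<noteq> Blue}"
  unfolding blue_set measure_pmf_single
  using main_R assms(3,4) by (simp add: edge_majority_next_def node_red)

end
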